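(* Let $p,q\ge1$, $\alpha:\mathbb Z_p\times\mathbb Z_q\to[0,1]$ a probability distribution with $\alpha(0,0)=0$, $\mathcal L_*(x)=\sum_{(i,j)}\alpha(p-i,q-j)(J_p^i\otimes J_q^j)x(J_p^i\otimes J_q^j)^*-x$ on $\mathcal M_p(\mathbb C)\otimes\mathcal M_q(\mathbb C)$, and $\mathcal T_{*t}=e^{t\mathcal L_*}$. Set $\alpha'(i,j)=\alpha(i,j)$ for $(i,j)\neq(0,0)$ and $\alpha'(0,0)=-1$, $\lambda_{kl}=\sum_{i,j}\alpha'(i,j)\overline\omega_p^{ik}\overline\omega_q^{jl}$ and $\Phi_{m,n}(t)=\sum_{k,l}\omega_p^{mk}\omega_q^{nl}e^{t\lambda_{kl}}$. Then: (i) for all $(i,j),(i',j')\in\mathbb Z_p\times\mathbb Z_q$ and $t\ge0$, $$\mathcal T_{*t}(|e_i\otimes e_j\rangle\langle e_{i'}\otimes e_{j'}|)=\frac{1}{pq}\sum_{m,n}\Phi_{m,n}(t)|e_{m+i}\otimes e_{n+j}\rangle\langle e_{m+i'}\otimes e_{n+j'}|,$$ and the functions $\Phi_{m,n}(t)$ are real-valued; (ii) $\Omega_t=\frac{1}{pq}\sum_{m,n}\Phi_{m,n}(t)|u_{mn}\rangle\langle u_{mn}|$, where $u_{mn}=\frac{1}{\sqrt{pq}}\sum_{i,j}(e_i\otimes e_j)\otimes(e_{m+i}\otimes e_{n+j})$.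
   Context: $\{e_j\}$ canonical bases of $\mathbb C^p,\mathbb C^q$ (indices mod $p$, $q$); $J_p=\sum_j|e_j\rangle\langle e_{j+1}|$, similarly $J_q$; $\omega_p,\omega_q$ primitive roots of unity of orders $p,q$; arguments of $\alpha$ mod $p,q$. With $\rho=\frac{1}{pq}\mathbf 1$, $\Omega_\rho=\frac{1}{\sqrt{pq}}\sum_{i,j}(e_i\otimes e_j)\otimes(e_i\otimes e_j)\in(\mathbb C^p\otimes\mathbb C^q)^{\otimes2}$ and $\Omega_t=(\mathrm{id}\otimes\mathcal T_{*t})(|\Omega_\rho\rangle\langle\Omega_\rho|)$. *)

theory Defs
  imports "HOL-Analysis.Analysis"
begin

text \<open>Operators on a finite-dimensional Hilbert space with orthonormal basis indexed by
  a finite set I are represented by their matrix entries, functions 'i => 'i => complex;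
  vectors by functions 'i => complex.  The basis of C^p (x) C^q is e_a (x) e_b, indexed by
  pairs (a,b) with a < p, b < q.\<close>

definition idx :: "nat \<Rightarrow> nat \<Rightarrow> (nat \<times> nat) set" where
  "idx p q = {..<p} \<times> {..<q}"

definition mmul :: "'i set \<Rightarrow> ('i \<Rightarrow> 'i \<Rightarrow> complex) \<Rightarrow> ('i \<Rightarrow> 'i \<Rightarrow> complex) \<Rightarrow> ('i \<Rightarrow> 'i \<Rightarrow> complex)" where
  "mmul I A B = (\<lambda>r c. \<Sum>k\<in>I. A r k * B k c)"

definition ident :: "'i \<Rightarrow> 'i \<Rightarrow> complex" where
  "ident = (\<lambda>r c. if r = c then 1 else 0)"

definition mpow :: "'i set \<Rightarrow> ('i \<Rightarrow> 'i \<Rightarrow> complex) \<Rightarrow> nat \<Rightarrow> ('i \<Rightarrow> 'i \<Rightarrow> complex)" where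
  "mpow I A n = ((\<lambda>X. mmul I A X) ^^ n) ident"

definition adj :: "('i \<Rightarrow> 'i \<Rightarrow> complex) \<Rightarrow> ('i \<Rightarrow> 'i \<Rightarrow> complex)" where
  "adj A = (\<lambda>r c. cnj (A c r))"

definition kron :: "(nat \<Rightarrow> nat \<Rightarrow> complex) \<Rightarrow> (nat \<Rightarrow> nat \<Rightarrow> complex) \<Rightarrow> (nat \<times> nat \<Rightarrow> nat \<times> nat \<Rightarrow> complex)" where
  "kron A B = (\<lambda>(a, b) (c, d). A a c * B b d)"

definition Jm :: "nat \<Rightarrow> nat \<Rightarrow> nat \<Rightarrow> complex" where
  "Jm p = (\<lambda>a b. if b = (a + 1) mod p then 1 else 0)"

definition Ushift :: "nat \<Rightarrow> nat \<Rightarrow> nat \<Rightarrow> nat \<Rightarrow> (nat \<times> nat \<Rightarrow> nat \<times> nat \<Rightarrow> complex)" where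
  "Ushift p q i j = kron (mpow {..<p} (Jm p) i) (mpow {..<q} (Jm q) j)"

definition Lstar :: "nat \<Rightarrow> nat \<Rightarrow> (nat \<Rightarrow> nat \<Rightarrow> real)
    \<Rightarrow> (nat \<times> nat \<Rightarrow> nat \<times> nat \<Rightarrow> complex) \<Rightarrow> (nat \<times> nat \<Rightarrow> nat \<times> nat \<Rightarrow> complex)" where
  "Lstar p q \<alpha> x = (\<lambda>r c.
     (\<Sum>(i, j)\<in>idx p q. complex_of_real (\<alpha> ((p - i) mod p) ((q - j) mod q)) *
        mmul (idx p q) (mmul (idx p q) (Ushift p q i j) x) (adj (Ushift p q i j)) r c) - x r c)"

definition Tstar :: "nat \<Rightarrow> nat \<Rightarrow> (nat \<Rightarrow> nat \<Rightarrow> real) \<Rightarrow> real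
    \<Rightarrow> (nat \<times> nat \<Rightarrow> nat \<times> nat \<Rightarrow> complex) \<Rightarrow> (nat \<times> nat \<Rightarrow> nat \<times> nat \<Rightarrow> complex)" where
  "Tstar p q \<alpha> t x = (\<lambda>r c. \<Sum>n. complex_of_real (t ^ n / fact n) * ((Lstar p q \<alpha> ^^ n) x) r c)"

definition ketbra :: "nat \<Rightarrow> nat \<Rightarrow> nat \<times> nat \<Rightarrow> nat \<times> nat \<Rightarrow> (nat \<times> nat \<Rightarrow> nat \<times> nat \<Rightarrow> complex)" where
  "ketbra p q = (\<lambda>(i, j) (i', j') r c.
      if r = (i mod p, j mod q) \<and> c = (i' mod p, j' mod q) then 1 else 0)"

definition alpha' :: "(nat \<Rightarrow> nat \<Rightarrow> real) \<Rightarrow> nat \<Rightarrow> nat \<Rightarrow> real" where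
  "alpha' \<alpha> i j = (if (i, j) = (0, 0) then -1 else \<alpha> i j)"

definition lam :: "nat \<Rightarrow> nat \<Rightarrow> (nat \<Rightarrow> nat \<Rightarrow> real) \<Rightarrow> complex \<Rightarrow> complex \<Rightarrow> nat \<Rightarrow> nat \<Rightarrow> complex" where
  "lam p q \<alpha> \<omega>p \<omega>q k l = (\<Sum>(i, j)\<in>idx p q.
      complex_of_real (alpha' \<alpha> i j) * cnj \<omega>p ^ (i * k) * cnj \<omega>q ^ (j * l))"

definition Phi :: "nat \<Rightarrow> nat \<Rightarrow> (nat \<Rightarrow> nat \<Rightarrow> real) \<Rightarrow> complex \<Rightarrow> complex \<Rightarrow> nat \<Rightarrow> nat \<Rightarrow> real \<Rightarrow> complex" where
  "Phi p q \<alpha> \<omega>p \<omega>q m n t = (\<Sum>(k, l)\<in>idx p q.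
      \<omega>p ^ (m * k) * \<omega>q ^ (n * l) * exp (complex_of_real t * lam p q \<alpha> \<omega>p \<omega>q k l))"

definition primitive_root :: "nat \<Rightarrow> complex \<Rightarrow> bool" where
  "primitive_root p \<omega> \<longleftrightarrow> \<omega> ^ p = 1 \<and> (\<forall>k. 0 < k \<and> k < p \<longrightarrow> \<omega> ^ k \<noteq> 1)"

definition Omega_rho :: "nat \<Rightarrow> nat \<Rightarrow> (nat \<times> nat) \<times> (nat \<times> nat) \<Rightarrow> complex" where
  "Omega_rho p q = (\<lambda>(x, y). if x = y then complex_of_real (1 / sqrt (real (p * q))) else 0)"

definition u_vec :: "nat \<Rightarrow> nat \<Rightarrow> nat \<Rightarrow> nat \<Rightarrow> (nat \<times> nat) \<times> (nat \<times> nat) \<Rightarrow> complex" where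
  "u_vec p q m n = (\<lambda>((a, b), (c, d)).
     if (c, d) = ((m + a) mod p, (n + b) mod q) then complex_of_real (1 / sqrt (real (p * q))) else 0)"

definition outer :: "('i \<Rightarrow> complex) \<Rightarrow> ('i \<Rightarrow> complex) \<Rightarrow> ('i \<Rightarrow> 'i \<Rightarrow> complex)" where
  "outer v w = (\<lambda>r c. v r * cnj (w c))"

definition id_tensor :: "(('j \<Rightarrow> 'j \<Rightarrow> complex) \<Rightarrow> ('j \<Rightarrow> 'j \<Rightarrow> complex))
    \<Rightarrow> ('i \<times> 'j \<Rightarrow> 'i \<times> 'j \<Rightarrow> complex) \<Rightarrow> ('i \<times> 'j \<Rightarrow> 'i \<times> 'j \<Rightarrow> complex)" where
  "id_tensor S X = (\<lambda>(r1, r2) (c1, c2). S (\<lambda>a b. X (r1, a) (c1, b)) r2 c2)"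

definition Omega_t :: "nat \<Rightarrow> nat \<Rightarrow> (nat \<Rightarrow> nat \<Rightarrow> real) \<Rightarrow> real
    \<Rightarrow> (nat \<times> nat) \<times> (nat \<times> nat) \<Rightarrow> (nat \<times> nat) \<times> (nat \<times> nat) \<Rightarrow> complex" where
  "Omega_t p q \<alpha> t = id_tensor (Tstar p q \<alpha> t) (outer (Omega_rho p q) (Omega_rho p q))"

end

theory Submission
  imports Defs
begin

lemma root_pow_mod:
  fixes w :: complex assumes "w ^ p = 1" shows "w ^ n = w ^ (n mod p)"
proof -
  have "w ^ n = w ^ (p * (n div p) + n mod p)" by simp
  also have "... = (w^p)^(n div p) * w^(n mod p)" by (metis power_add power_mult)
  finally show ?thesis using assms by simp
qed

lemma root_pow_cong:
  fixes w :: complex assumes "w ^ p = 1" "a mod p = b mod p" shows "w ^ a = w ^ b"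
  using root_pow_mod[OF assms(1), of a] root_pow_mod[OF assms(1), of b] assms(2) by simp

lemma root_cnj_mult:
  fixes w :: complex assumes "w ^ p = 1" "p \<ge> 1" shows "cnj w * w = 1"
proof -
  have "norm w = 1" using power_eq_1_iff[OF assms(1)] assms(2) by auto
  hence "w * cnj w = 1" using complex_norm_square[of w] by simp
  thus ?thesis by (simp add: mult.commute)
qed

lemma root_neg:
  fixes w :: complex assumes "w ^ p = 1" "p \<ge> 1" "k \<le> p"
  shows "w ^ (((p - k) mod p) * x) = cnj (w ^ (k * x))"
proof -
  have w0: "w \<noteq> 0" using assms by (auto simp: power_0_left)
  have a0: "w ^ (k * x) \<noteq> 0" using w0 by simp
  have "w ^ (((p - k) mod p) * x) * w ^ (k * x) = (w ^ ((p - k) mod p) * w ^ k) ^ x"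
    by (simp add: power_mult_distrib flip: power_mult)
  also have "w ^ ((p - k) mod p) = w ^ (p - k)"
    using root_pow_mod[OF assms(1), of "p - k"] by simp
  also have "w ^ (p - k) * w ^ k = w ^ p" using assms(3) by (simp flip: power_add)
  finally have 1: "w ^ (((p - k) mod p) * x) * w ^ (k * x) = 1" using assms(1) by simp
  have 2: "cnj (w ^ (k * x)) * w ^ (k * x) = 1"
    using root_cnj_mult[OF assms(1,2)] by (simp add: power_mult_distrib[symmetric])
  from 1 2 a0 show ?thesis
    by (metis mult_cancel_right)
qed

lemma geo_root:
  fixes w :: complex assumes "primitive_root p w" "d < p"
  shows "(\<Sum>k<p. w ^ (d * k)) = (if d = 0 then of_nat p else 0)"
proof (cases "d = 0")
  case True then show ?thesis by simp
next
  case False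
  have ne: "w ^ d \<noteq> 1" using assms False unfolding primitive_root_def by auto
  have "(\<Sum>k<p. w ^ (d * k)) = (\<Sum>k<p. (w ^ d) ^ k)" by (simp add: power_mult)
  also have "... = ((w^d)^p - 1) / (w^d - 1)" using geometric_sum[OF ne] by simp
  also have "(w^d)^p = 1" using assms unfolding primitive_root_def
    by (metis power_mult mult.commute power_one)
  finally show ?thesis using False by simp
qed

lemma mpow_J:
  assumes "p \<ge> 1" "a < p"
  shows "mpow {..<p} (Jm p) i a b = (if b = (a + i) mod p then 1 else 0)"
  using assms(2)
proof (induction i arbitrary: a)
  case 0 then show ?case by (simp add: mpow_def ident_def)
next
  case (Suc i)
  have "mpow {..<p} (Jm p) (Suc i) a b = (\<Sum>k<p. Jm p a k * mpow {..<p} (Jm p) i k b)"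
    by (simp add: mpow_def mmul_def)
  also have "... = (\<Sum>k<p. if k = (a + 1) mod p then mpow {..<p} (Jm p) i k b else 0)"
    by (rule sum.cong) (auto simp: Jm_def)
  also have "... = mpow {..<p} (Jm p) i ((a + 1) mod p) b"
    using assms(1) by simp
  also have "... = (if b = ((a + 1) mod p + i) mod p then 1 else 0)"
    using Suc.IH[of "(a+1) mod p"] assms(1) by simp
  also have "((a + 1) mod p + i) mod p = (a + Suc i) mod p" by (simp add: mod_add_left_eq)
  finally show ?case .
qed

definition sh :: "nat \<Rightarrow> nat \<Rightarrow> nat \<times> nat \<Rightarrow> nat \<times> nat \<Rightarrow> nat \<times> nat" where
  "sh p q r d = ((fst r + fst d) mod p, (snd r + snd d) mod q)"

lemma sh_in: "p \<ge> 1 \<Longrightarrow> q \<ge> 1 \<Longrightarrow> sh p q r d \<in> idx p q"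
  by (simp add: sh_def idx_def)

lemma Ushift_eq:
  assumes "p \<ge> 1" "q \<ge> 1" "r \<in> idx p q"
  shows "Ushift p q i j r k = (if k = sh p q r (i, j) then 1 else 0)"
  using assms mpow_J[OF assms(1)] mpow_J[OF assms(2)]
  by (cases r; cases k) (auto simp: Ushift_def kron_def sh_def idx_def)

lemma Lstar_formula:
  assumes "p \<ge> 1" "q \<ge> 1" "r \<in> idx p q" "c \<in> idx p q"
  shows "Lstar p q \<alpha> x r c =
    (\<Sum>ij\<in>idx p q. complex_of_real (\<alpha> ((p - fst ij) mod p) ((q - snd ij) mod q)) *
        x (sh p q r ij) (sh p q c ij)) - x r c"
proof -
  have fin: "finite (idx p q)" by (simp add: idx_def)
  have key: "mmul (idx p q) (mmul (idx p q) (Ushift p q i j) x) (adj (Ushift p q i j)) r c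
      = x (sh p q r (i, j)) (sh p q c (i, j))" for i j
  proof -
    have 1: "mmul (idx p q) (Ushift p q i j) x r k = x (sh p q r (i, j)) k" for k
    proof -
      have "mmul (idx p q) (Ushift p q i j) x r k
          = (\<Sum>k1\<in>idx p q. if k1 = sh p q r (i, j) then x k1 k else 0)"
        unfolding mmul_def by (rule sum.cong) (auto simp: Ushift_eq[OF assms(1,2,3)])
      also have "... = x (sh p q r (i, j)) k" using fin sh_in[OF assms(1,2)] by simp
      finally show ?thesis .
    qed
    have "mmul (idx p q) (mmul (idx p q) (Ushift p q i j) x) (adj (Ushift p q i j)) r c
       = (\<Sum>k\<in>idx p q. if k = sh p q c (i, j) then x (sh p q r (i, j)) k else 0)"
      unfolding mmul_def[of _ "mmul _ _ _"] adj_def 1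
      by (rule sum.cong) (auto simp: Ushift_eq[OF assms(1,2,4)])
    also have "... = x (sh p q r (i, j)) (sh p q c (i, j))" using fin sh_in[OF assms(1,2)] by simp
    finally show ?thesis .
  qed
  show ?thesis unfolding Lstar_def
    by (simp add: key split_def)
qed


definition chi :: "complex \<Rightarrow> complex \<Rightarrow> nat \<Rightarrow> nat \<Rightarrow> nat \<times> nat \<Rightarrow> complex" where
  "chi wp wq k l d = wp ^ (fst d * k) * wq ^ (snd d * l)"

definition Kb :: "nat \<Rightarrow> nat \<Rightarrow> nat \<times> nat \<Rightarrow> nat \<times> nat \<Rightarrow> nat \<times> nat \<Rightarrow> nat \<times> nat \<Rightarrow> nat \<times> nat \<Rightarrow> complex" where
  "Kb p q x0 y0 d r c = (if r = ((fst d + fst x0) mod p, (snd d + snd x0) mod q) \<and>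
      c = ((fst d + fst y0) mod p, (snd d + snd y0) mod q) then 1 else 0)"

definition negi :: "nat \<Rightarrow> nat \<Rightarrow> nat \<times> nat \<Rightarrow> nat \<times> nat" where
  "negi p q s = ((p - fst s) mod p, (q - snd s) mod q)"

lemma ketbra_Kb: "ketbra p q (fst d + fst x0, snd d + snd x0) (fst d + fst y0, snd d + snd y0) r c
   = Kb p q x0 y0 d r c"
  by (simp add: ketbra_def Kb_def)

lemma mod_add_cancel_nat: "((a::nat) + i) mod p = (b + i) mod p \<longleftrightarrow> a mod p = b mod p"
proof (cases "p = 0")
  case True then show ?thesis by simp
next
  case False
  define j where "j = p - i mod p"
  have ij: "i + j = p * (i div p + 1)"
  proof -
    have lt: "i mod p < p" using False by simp
    have "i + j = p * (i div p) + i mod p + (p - i mod p)" unfolding j_def by simp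
    also have "... = p * (i div p) + p" using lt by linarith
    finally show ?thesis by simp
  qed
  have k: "(x + i + j) mod p = x mod p" for x
    by (simp only: add.assoc ij mod_mult_self2)
  show ?thesis
  proof
    assume h: "(a + i) mod p = (b + i) mod p"
    have "a mod p = ((a + i) mod p + j) mod p" by (simp add: mod_add_left_eq k)
    also have "... = ((b + i) mod p + j) mod p" using h by simp
    also have "... = b mod p" by (simp add: mod_add_left_eq k)
    finally show "a mod p = b mod p" .
  next
    assume "a mod p = b mod p" then show "(a + i) mod p = (b + i) mod p"
      by (metis mod_add_left_eq)
  qed
qed

lemma mod_cancel_add: "a < (p::nat) \<Longrightarrow> ((a + i) mod p = (b + i) mod p) = (a = b mod p)"
  using mod_add_cancel_nat[of a i p b] by simp

lemma neg_neg: "a < (p::nat) \<Longrightarrow> (p - (p - a) mod p) mod p = a"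
  by (cases "a = 0") auto

context
  fixes p q :: nat and \<alpha> :: "nat \<Rightarrow> nat \<Rightarrow> real" and wp wq :: complex
  assumes p1: "p \<ge> 1" and q1: "q \<ge> 1" and a00: "\<alpha> 0 0 = 0"
    and prp: "primitive_root p wp" and prq: "primitive_root q wq"
begin

lemma wpp: "wp ^ p = 1" using prp by (simp add: primitive_root_def)
lemma wqq: "wq ^ q = 1" using prq by (simp add: primitive_root_def)

lemma fin: "finite (idx p q)" by (simp add: idx_def)

lemma sum_sh: "(\<Sum>d\<in>idx p q. f (sh p q d ij)) = (\<Sum>d\<in>idx p q. f d)"
proof -
  have inj: "inj_on (\<lambda>d. sh p q d ij) (idx p q)"
  proof (rule inj_onI)
    fix x y assume xy: "x \<in> idx p q" "y \<in> idx p q" "sh p q x ij = sh p q y ij"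
    then have "fst x < p" "fst y < p" "snd x < q" "snd y < q" by (auto simp: idx_def)
    with xy(3) show "x = y" unfolding sh_def
      by (simp add: mod_cancel_add prod_eq_iff)
  qed
  have im: "(\<lambda>d. sh p q d ij) ` idx p q = idx p q"
    by (rule endo_inj_surj[OF fin _ inj]) (auto simp: sh_in[OF p1 q1])
  show ?thesis using sum.reindex[OF inj, of f] im by (simp add: o_def)
qed

lemma sum_neg: "(\<Sum>d\<in>idx p q. f (negi p q d)) = (\<Sum>d\<in>idx p q. f d)"
  by (rule sum.reindex_bij_witness[where i="negi p q" and j="negi p q"])
     (auto simp: negi_def idx_def neg_neg p1 q1)

lemma Kb_shift:
  assumes "r \<in> idx p q" "c \<in> idx p q"
  shows "Kb p q x0 y0 (sh p q d ij) (sh p q r ij) (sh p q c ij) = Kb p q x0 y0 d r c"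
proof -
  obtain r1 r2 c1 c2 where rc: "r = (r1, r2)" "c = (c1, c2)" by fastforce
  have lt: "r1 < p" "r2 < q" "c1 < p" "c2 < q" using assms rc by (auto simp: idx_def)
  have e1: "((fst d + fst ij) mod p + a) mod p = (fst d + a + fst ij) mod p" for a
    by (simp add: mod_simps add_ac)
  have e2: "((snd d + snd ij) mod q + a) mod q = (snd d + a + snd ij) mod q" for a
    by (simp add: mod_simps add_ac)
  show ?thesis unfolding Kb_def sh_def rc
    using lt by (simp add: e1 e2 mod_cancel_add)
qed

lemma chi_shift: "chi wp wq k l (sh p q d ij) = chi wp wq k l d * chi wp wq k l ij"
proof -
  have m1: "(((fst d + fst ij) mod p) * k) mod p = ((fst d + fst ij) * k) mod p"
    by (simp add: mod_mult_left_eq)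
  have m2: "(((snd d + snd ij) mod q) * l) mod q = ((snd d + snd ij) * l) mod q"
    by (simp add: mod_mult_left_eq)
  have 1: "wp ^ (((fst d + fst ij) mod p) * k) = wp ^ (fst d * k) * wp ^ (fst ij * k)"
    using root_pow_cong[OF wpp m1] by (simp add: add_mult_distrib power_add)
  have 2: "wq ^ (((snd d + snd ij) mod q) * l) = wq ^ (snd d * l) * wq ^ (snd ij * l)"
    using root_pow_cong[OF wqq m2] by (simp add: add_mult_distrib power_add)
  show ?thesis unfolding chi_def sh_def fst_conv snd_conv 1 2 by (simp add: mult_ac)
qed

definition Af :: "nat \<times> nat \<Rightarrow> complex" where
  "Af ij = complex_of_real (\<alpha> ((p - fst ij) mod p) ((q - snd ij) mod q))"

lemma chi_negi: "s \<in> idx p q \<Longrightarrow> chi wp wq k l (negi p q s) = cnj (chi wp wq k l s)"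
  unfolding chi_def negi_def idx_def
  using root_neg[OF wpp p1, of "fst s" k] root_neg[OF wqq q1, of "snd s" l] by auto

lemma lam_eq: "lam p q \<alpha> wp wq k l = (\<Sum>ij\<in>idx p q. Af ij * chi wp wq k l ij) - 1"
proof -
  have "(\<Sum>ij\<in>idx p q. Af ij * chi wp wq k l ij)
      = (\<Sum>ij\<in>idx p q. Af (negi p q ij) * chi wp wq k l (negi p q ij))"
    by (rule sum_neg[symmetric])
  also have "... = (\<Sum>ij\<in>idx p q. complex_of_real (\<alpha> (fst ij) (snd ij)) * cnj (chi wp wq k l ij))"
    by (rule sum.cong) (auto simp: Af_def chi_negi, auto simp: negi_def neg_neg idx_def)
  finally have 1: "(\<Sum>ij\<in>idx p q. Af ij * chi wp wq k l ij)
      = (\<Sum>ij\<in>idx p q. complex_of_real (\<alpha> (fst ij) (snd ij)) * cnj (chi wp wq k l ij))" .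
  have "lam p q \<alpha> wp wq k l = (\<Sum>ij\<in>idx p q. complex_of_real (\<alpha> (fst ij) (snd ij)) * cnj (chi wp wq k l ij)
       - (if ij = (0,0) then 1 else 0))"
    unfolding lam_def split_def
    by (rule sum.cong) (auto simp: alpha'_def a00 chi_def)
  also have "... = (\<Sum>ij\<in>idx p q. complex_of_real (\<alpha> (fst ij) (snd ij)) * cnj (chi wp wq k l ij)) - 1"
    using p1 q1 by (simp add: sum_subtractf fin idx_def)
  finally show ?thesis using 1 by simp
qed

definition E :: "nat \<times> nat \<Rightarrow> nat \<times> nat \<Rightarrow> nat \<Rightarrow> nat \<Rightarrow> nat \<times> nat \<Rightarrow> nat \<times> nat \<Rightarrow> complex" where
  "E x0 y0 k l r c = (\<Sum>d\<in>idx p q. chi wp wq k l d * Kb p q x0 y0 d r c)"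

lemma L_formula':
  assumes "r \<in> idx p q" "c \<in> idx p q"
  shows "Lstar p q \<alpha> x r c = (\<Sum>ij\<in>idx p q. Af ij * x (sh p q r ij) (sh p q c ij)) - x r c"
  using Lstar_formula[OF p1 q1 assms] by (simp add: Af_def)

lemma E_eigen:
  assumes "r \<in> idx p q" "c \<in> idx p q"
  shows "Lstar p q \<alpha> (E x0 y0 k l) r c = lam p q \<alpha> wp wq k l * E x0 y0 k l r c"
proof -
  have sh: "E x0 y0 k l (sh p q r ij) (sh p q c ij) = chi wp wq k l ij * E x0 y0 k l r c" for ij
  proof -
    have "E x0 y0 k l (sh p q r ij) (sh p q c ij)
       = (\<Sum>d\<in>idx p q. chi wp wq k l (sh p q d ij) * Kb p q x0 y0 (sh p q d ij) (sh p q r ij) (sh p q c ij))"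
      unfolding E_def by (rule sum_sh[symmetric])
    also have "... = (\<Sum>d\<in>idx p q. chi wp wq k l ij * (chi wp wq k l d * Kb p q x0 y0 d r c))"
      by (simp add: Kb_shift assms chi_shift mult_ac)
    finally show ?thesis by (simp add: E_def sum_distrib_left)
  qed
  show ?thesis unfolding L_formula'[OF assms] sh lam_eq
    by (simp add: algebra_simps sum_distrib_left sum_distrib_right)
qed


lemma chi_sum:
  assumes "d \<in> idx p q"
  shows "(\<Sum>kl\<in>idx p q. chi wp wq (fst kl) (snd kl) d) = (if d = (0,0) then of_nat (p*q) else 0)"
proof -
  have "(\<Sum>kl\<in>idx p q. chi wp wq (fst kl) (snd kl) d)
      = (\<Sum>k<p. wp ^ (fst d * k)) * (\<Sum>l<q. wq ^ (snd d * l))"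
    unfolding chi_def idx_def sum_product sum.cartesian_product by (simp add: split_def)
  also have "... = (if d = (0,0) then of_nat (p*q) else 0)"
    using assms geo_root[OF prp, of "fst d"] geo_root[OF prq, of "snd d"]
    by (cases d) (auto simp: idx_def)
  finally show ?thesis .
qed

lemma ketbra_fourier:
  "ketbra p q x0 y0 r c = complex_of_real (1 / real (p*q)) *
     (\<Sum>kl\<in>idx p q. E x0 y0 (fst kl) (snd kl) r c)"
proof -
  have "(\<Sum>kl\<in>idx p q. E x0 y0 (fst kl) (snd kl) r c)
      = (\<Sum>d\<in>idx p q. (\<Sum>kl\<in>idx p q. chi wp wq (fst kl) (snd kl) d) * Kb p q x0 y0 d r c)"
    unfolding E_def sum_distrib_right by (rule sum.swap)
  also have "... = (\<Sum>d\<in>idx p q. (if d = (0,0) then of_nat (p*q) * Kb p q x0 y0 d r c else 0))"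
    by (rule sum.cong) (auto simp: chi_sum)
  also have "... = of_nat (p*q) * Kb p q x0 y0 (0,0) r c"
    using fin p1 q1 by (simp add: idx_def)
  also have "Kb p q x0 y0 (0,0) r c = ketbra p q x0 y0 r c"
    using ketbra_Kb[of p q "(0,0)" x0 y0 r c] by simp
  finally show ?thesis using p1 q1 by simp
qed

lemma alg:
  fixes a :: "'i \<Rightarrow> complex"
  assumes "finite A" "finite B"
  shows "(\<Sum>i\<in>A. a i * (s * (\<Sum>k\<in>B. g k * e k i))) - s * (\<Sum>k\<in>B. g k * e0 k)
       = s * (\<Sum>k\<in>B. g k * ((\<Sum>i\<in>A. a i * e k i) - e0 k))"
proof -
  have "(\<Sum>i\<in>A. a i * (s * (\<Sum>k\<in>B. g k * e k i))) = s * (\<Sum>k\<in>B. g k * (\<Sum>i\<in>A. a i * e k i))"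
    by (simp add: sum_distrib_left mult_ac) (rule sum.swap)
  then show ?thesis by (simp add: right_diff_distrib sum_subtractf)
qed

lemma L_pow:
  assumes "r \<in> idx p q" "c \<in> idx p q"
  shows "(Lstar p q \<alpha> ^^ n) (ketbra p q x0 y0) r c = complex_of_real (1 / real (p*q)) *
     (\<Sum>kl\<in>idx p q. lam p q \<alpha> wp wq (fst kl) (snd kl) ^ n * E x0 y0 (fst kl) (snd kl) r c)"
  using assms
proof (induction n arbitrary: r c)
  case 0 then show ?case by (simp add: ketbra_fourier)
next
  case (Suc n)
  let ?Y = "(Lstar p q \<alpha> ^^ n) (ketbra p q x0 y0)"
  let ?s = "complex_of_real (1 / real (p*q))"
  have "(Lstar p q \<alpha> ^^ Suc n) (ketbra p q x0 y0) r c = Lstar p q \<alpha> ?Y r c" by simp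
  also have "... = (\<Sum>ij\<in>idx p q. Af ij * ?Y (sh p q r ij) (sh p q c ij)) - ?Y r c"
    by (rule L_formula'[OF Suc.prems])
  also have "... = (\<Sum>ij\<in>idx p q. Af ij * (?s * (\<Sum>kl\<in>idx p q. lam p q \<alpha> wp wq (fst kl) (snd kl) ^ n
       * E x0 y0 (fst kl) (snd kl) (sh p q r ij) (sh p q c ij))))
      - ?s * (\<Sum>kl\<in>idx p q. lam p q \<alpha> wp wq (fst kl) (snd kl) ^ n * E x0 y0 (fst kl) (snd kl) r c)"
    using Suc.IH[OF Suc.prems] Suc.IH[OF sh_in[OF p1 q1] sh_in[OF p1 q1]] by simp
  also have "... = ?s * (\<Sum>kl\<in>idx p q. lam p q \<alpha> wp wq (fst kl) (snd kl) ^ n *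
      ((\<Sum>ij\<in>idx p q. Af ij * E x0 y0 (fst kl) (snd kl) (sh p q r ij) (sh p q c ij))
       - E x0 y0 (fst kl) (snd kl) r c))"
    by (rule alg[OF fin fin])
  also have "... = ?s * (\<Sum>kl\<in>idx p q. lam p q \<alpha> wp wq (fst kl) (snd kl) ^ n *
      Lstar p q \<alpha> (E x0 y0 (fst kl) (snd kl)) r c)"
    by (simp add: L_formula'[OF Suc.prems])
  also have "... = ?s * (\<Sum>kl\<in>idx p q. lam p q \<alpha> wp wq (fst kl) (snd kl) ^ Suc n *
      E x0 y0 (fst kl) (snd kl) r c)"
    by (simp add: E_eigen[OF Suc.prems] mult_ac)
  finally show ?case .
qed

lemma Phi_eq: "Phi p q \<alpha> wp wq m n t = (\<Sum>kl\<in>idx p q. chi wp wq (fst kl) (snd kl) (m, n) *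
    exp (complex_of_real t * lam p q \<alpha> wp wq (fst kl) (snd kl)))"
  unfolding Phi_def chi_def by (simp add: split_def)

lemma T_sums:
  assumes "r \<in> idx p q" "c \<in> idx p q"
  shows "(\<lambda>n. complex_of_real (t ^ n / fact n) * (Lstar p q \<alpha> ^^ n) (ketbra p q x0 y0) r c) sums
    (complex_of_real (1 / real (p*q)) *
      (\<Sum>d\<in>idx p q. Phi p q \<alpha> wp wq (fst d) (snd d) t * Kb p q x0 y0 d r c))"
proof -
  let ?s = "complex_of_real (1 / real (p*q))"
  let ?l = "\<lambda>kl. lam p q \<alpha> wp wq (fst kl) (snd kl)"
  let ?E = "\<lambda>kl. E x0 y0 (fst kl) (snd kl) r c"
  have eq: "complex_of_real (t ^ n / fact n) * (Lstar p q \<alpha> ^^ n) (ketbra p q x0 y0) r c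
      = (\<Sum>kl\<in>idx p q. (?s * ?E kl) * ((complex_of_real t * ?l kl) ^ n /\<^sub>R fact n))" for n
    unfolding L_pow[OF assms]
    by (simp add: scaleR_conv_of_real power_mult_distrib sum_distrib_left mult_ac divide_inverse)
  have S: "(\<lambda>n. \<Sum>kl\<in>idx p q. (?s * ?E kl) * ((complex_of_real t * ?l kl) ^ n /\<^sub>R fact n)) sums
      (\<Sum>kl\<in>idx p q. (?s * ?E kl) * exp (complex_of_real t * ?l kl))"
    by (rule sums_sum) (rule sums_mult[OF exp_converges])
  moreover have H2: "(\<Sum>kl\<in>idx p q. (?s * ?E kl) * exp (complex_of_real t * ?l kl))
      = ?s * (\<Sum>d\<in>idx p q. Phi p q \<alpha> wp wq (fst d) (snd d) t * Kb p q x0 y0 d r c)"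
  proof -
    have "(\<Sum>kl\<in>idx p q. ?E kl * exp (complex_of_real t * ?l kl))
        = (\<Sum>kl\<in>idx p q. \<Sum>d\<in>idx p q. chi wp wq (fst kl) (snd kl) d * exp (complex_of_real t * ?l kl)
             * Kb p q x0 y0 d r c)"
      unfolding E_def sum_distrib_right by (simp add: mult_ac)
    also have "... = (\<Sum>d\<in>idx p q. \<Sum>kl\<in>idx p q. chi wp wq (fst kl) (snd kl) d * exp (complex_of_real t * ?l kl)
             * Kb p q x0 y0 d r c)"
      by (rule sum.swap)
    also have "... = (\<Sum>d\<in>idx p q. Phi p q \<alpha> wp wq (fst d) (snd d) t * Kb p q x0 y0 d r c)"
      by (simp add: Phi_eq sum_distrib_right)
    finally have H: "(\<Sum>kl\<in>idx p q. ?E kl * exp (complex_of_real t * ?l kl))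
        = (\<Sum>d\<in>idx p q. Phi p q \<alpha> wp wq (fst d) (snd d) t * Kb p q x0 y0 d r c)" .
    have "(\<Sum>kl\<in>idx p q. (?s * ?E kl) * exp (complex_of_real t * ?l kl))
       = ?s * (\<Sum>kl\<in>idx p q. ?E kl * exp (complex_of_real t * ?l kl))"
      by (simp add: sum_distrib_left mult.assoc)
    then show ?thesis using H by simp
  qed
  show ?thesis unfolding eq using S unfolding H2 .
qed

lemma Tstar_eq:
  assumes "r \<in> idx p q" "c \<in> idx p q"
  shows "Tstar p q \<alpha> t (ketbra p q x0 y0) r c = complex_of_real (1 / real (p*q)) *
      (\<Sum>d\<in>idx p q. Phi p q \<alpha> wp wq (fst d) (snd d) t * Kb p q x0 y0 d r c)"
  unfolding Tstar_def using sums_unique[OF T_sums[OF assms]] by simp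

lemma chi_neg_freq:
  assumes "k < p" "l < q"
  shows "chi wp wq ((p - k) mod p) ((q - l) mod q) d = cnj (chi wp wq k l d)"
  using root_neg[OF wpp p1, of k "fst d"] root_neg[OF wqq q1, of l "snd d"] assms
  unfolding chi_def by (simp add: mult.commute)

lemma cnj_lam:
  assumes "k < p" "l < q"
  shows "cnj (lam p q \<alpha> wp wq k l) = lam p q \<alpha> wp wq ((p - k) mod p) ((q - l) mod q)"
  unfolding lam_eq using assms by (simp add: chi_neg_freq Af_def)

lemma Phi_real: "Im (Phi p q \<alpha> wp wq m n t) = 0"
proof -
  have "cnj (Phi p q \<alpha> wp wq m n t) = (\<Sum>kl\<in>idx p q. chi wp wq (fst (negi p q kl)) (snd (negi p q kl)) (m, n) *
    exp (complex_of_real t * lam p q \<alpha> wp wq (fst (negi p q kl)) (snd (negi p q kl))))"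
    unfolding Phi_eq cnj_sum
    by (rule sum.cong) (auto simp: negi_def idx_def chi_neg_freq cnj_lam exp_cnj)
  also have "... = Phi p q \<alpha> wp wq m n t" unfolding Phi_eq by (rule sum_neg)
  finally have "cnj (Phi p q \<alpha> wp wq m n t) = Phi p q \<alpha> wp wq m n t" .
  then have "Im (cnj (Phi p q \<alpha> wp wq m n t)) = Im (Phi p q \<alpha> wp wq m n t)" by simp
  then show ?thesis by simp
qed

lemma L_scal:
  assumes "r \<in> idx p q" "c \<in> idx p q"
  shows "(Lstar p q \<alpha> ^^ n) (\<lambda>a b. s * X a b) r c = s * (Lstar p q \<alpha> ^^ n) X r c"
  using assms
proof (induction n arbitrary: r c)
  case 0 then show ?case by simp
next
  case (Suc n)
  show ?case
    using Suc.IH[OF sh_in[OF p1 q1] sh_in[OF p1 q1]] Suc.IH[OF Suc.prems]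
    by (simp add: L_formula'[OF Suc.prems] right_diff_distrib sum_distrib_left mult_ac)
qed

end


lemma sq_aux: "complex_of_real (1 / sqrt (real (p * q))) * cnj (complex_of_real (1 / sqrt (real (p * q))))
   = complex_of_real (1 / real (p * q))"
proof -
  have "1 / sqrt (real (p * q)) * (1 / sqrt (real (p * q))) = 1 / real (p * q)"
    by (simp add: real_sqrt_mult_self)
  then show ?thesis by (metis complex_cnj_complex_of_real of_real_mult)
qed

lemma outer_u:
  "outer (u_vec p q m n) (u_vec p q m n) ((a, b), (e, f)) ((c, d), (g, h))
   = complex_of_real (1 / real (p * q)) * Kb p q (a, b) (c, d) (m, n) (e, f) (g, h)"
  using sq_aux[of p q] by (auto simp: outer_def u_vec_def Kb_def)

lemma outer_Omega:
  assumes "(a, b) \<in> idx p q" "(c, d) \<in> idx p q"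
  shows "(\<lambda>x y. outer (Omega_rho p q) (Omega_rho p q) ((a, b), x) ((c, d), y))
    = (\<lambda>x y. complex_of_real (1 / real (p * q)) * ketbra p q (a, b) (c, d) x y)"
  using assms sq_aux[of p q] by (auto simp: outer_def Omega_rho_def ketbra_def idx_def fun_eq_iff)

theorem mainTheorem9:
  fixes p q :: nat and \<alpha> :: "nat \<Rightarrow> nat \<Rightarrow> real" and \<omega>p \<omega>q :: complex
  assumes "p \<ge> 1" and "q \<ge> 1"
    and "\<forall>(i, j)\<in>idx p q. 0 \<le> \<alpha> i j \<and> \<alpha> i j \<le> 1"
    and "(\<Sum>(i, j)\<in>idx p q. \<alpha> i j) = 1"
    and "\<alpha> 0 0 = 0"
    and "primitive_root p \<omega>p" and "primitive_root q \<omega>q"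
  shows "(\<forall>ij\<in>idx p q. \<forall>ij'\<in>idx p q. \<forall>t::real. t \<ge> 0 \<longrightarrow>
            (\<forall>r\<in>idx p q. \<forall>c\<in>idx p q.
              Tstar p q \<alpha> t (ketbra p q ij ij') r c =
              complex_of_real (1 / real (p * q)) *
              (\<Sum>(m, n)\<in>idx p q. Phi p q \<alpha> \<omega>p \<omega>q m n t *
                 ketbra p q (m + fst ij, n + snd ij) (m + fst ij', n + snd ij') r c)))
       \<and> (\<forall>(m, n)\<in>idx p q. \<forall>t::real. t \<ge> 0 \<longrightarrow> Im (Phi p q \<alpha> \<omega>p \<omega>q m n t) = 0)
       \<and> (\<forall>t::real. t \<ge> 0 \<longrightarrow>
            (\<forall>R\<in>idx p q \<times> idx p q. \<forall>C\<in>idx p q \<times> idx p q.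
              Omega_t p q \<alpha> t R C =
              complex_of_real (1 / real (p * q)) *
              (\<Sum>(m, n)\<in>idx p q. Phi p q \<alpha> \<omega>p \<omega>q m n t *
                 outer (u_vec p q m n) (u_vec p q m n) R C)))"
proof (intro conjI)
  note A = assms(1,2,5,6,7)
  let ?s = "complex_of_real (1 / real (p * q))"
  show "\<forall>ij\<in>idx p q. \<forall>ij'\<in>idx p q. \<forall>t::real. t \<ge> 0 \<longrightarrow>
            (\<forall>r\<in>idx p q. \<forall>c\<in>idx p q.
              Tstar p q \<alpha> t (ketbra p q ij ij') r c =
              ?s * (\<Sum>(m, n)\<in>idx p q. Phi p q \<alpha> \<omega>p \<omega>q m n t *
                 ketbra p q (m + fst ij, n + snd ij) (m + fst ij', n + snd ij') r c))"
    by (auto simp: Tstar_eq[of p q \<alpha> \<omega>p \<omega>q, OF A] ketbra_Kb split_def)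
  show "\<forall>(m, n)\<in>idx p q. \<forall>t::real. t \<ge> 0 \<longrightarrow> Im (Phi p q \<alpha> \<omega>p \<omega>q m n t) = 0"
    using Phi_real[of p q \<alpha> \<omega>p \<omega>q, OF A] by auto
  show "\<forall>t::real. t \<ge> 0 \<longrightarrow>
            (\<forall>R\<in>idx p q \<times> idx p q. \<forall>C\<in>idx p q \<times> idx p q.
              Omega_t p q \<alpha> t R C =
              ?s * (\<Sum>(m, n)\<in>idx p q. Phi p q \<alpha> \<omega>p \<omega>q m n t *
                 outer (u_vec p q m n) (u_vec p q m n) R C))"
  proof (intro allI impI ballI)
    fix t :: real and R C
    assume "R \<in> idx p q \<times> idx p q" "C \<in> idx p q \<times> idx p q"
    then obtain a b e f c d g h where RC: "R = ((a, b), (e, f))" "C = ((c, d), (g, h))"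
      and m: "(a, b) \<in> idx p q" "(e, f) \<in> idx p q" "(c, d) \<in> idx p q" "(g, h) \<in> idx p q"
      by (metis mem_Times_iff prod.collapse)
    let ?K = "ketbra p q (a, b) (c, d)"
    let ?V = "?s * (\<Sum>dd\<in>idx p q. Phi p q \<alpha> \<omega>p \<omega>q (fst dd) (snd dd) t * Kb p q (a, b) (c, d) dd (e, f) (g, h))"
    have "Omega_t p q \<alpha> t R C = Tstar p q \<alpha> t (\<lambda>x y. ?s * ?K x y) (e, f) (g, h)"
      unfolding Omega_t_def RC id_tensor_def using outer_Omega[OF m(1,3)] by simp
    also have "... = (\<Sum>n. ?s * (complex_of_real (t ^ n / fact n) * (Lstar p q \<alpha> ^^ n) ?K (e, f) (g, h)))"
      unfolding Tstar_def L_scal[of p q \<alpha> \<omega>p \<omega>q, OF A m(2,4)] by (simp only: mult_ac)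
    also have "... = ?s * ?V"
      by (rule sums_unique[symmetric], rule sums_mult, rule T_sums[of p q \<alpha> \<omega>p \<omega>q, OF A m(2,4)])
    also have "... = ?s * (\<Sum>(mm, nn)\<in>idx p q. Phi p q \<alpha> \<omega>p \<omega>q mm nn t *
                 outer (u_vec p q mm nn) (u_vec p q mm nn) R C)"
      unfolding RC outer_u by (simp add: split_def sum_distrib_left mult_ac)
    finally show "Omega_t p q \<alpha> t R C = ?s * (\<Sum>(m, n)\<in>idx p q. Phi p q \<alpha> \<omega>p \<omega>q m n t *
                 outer (u_vec p q m n) (u_vec p q m n) R C)" .
  qed
qed

end
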